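(* Let $t,t'\in B_n$ with $t\neq t'$ and let $G$ be a digraph such that $\mathbb{A}(G)$ satisfies $t\approx t'$. Then $O_G\le Y_{t,t'}+1$.
   Context: Digraphs $G=(V,E)$ have $E\subseteq V\times V$, loops allowed, possibly infinite. $\mathbb{A}(G)$ is the groupoid on $V\cup\{\infty\}$ with $xy=x$ if $x,y\in V$, $(x,y)\in E$, and $xy=\infty$ otherwise. $B_n$: binary terms with $x_1,\dots,x_n$ each occurring once in this order; $G(t)$: rooted tree defined by $G(x_i)$ a single vertex and $G(t_1t_2)=G(t_1)\cup G(t_2)$ plus an edge from the leftmost variable of $t_1$ to that of $t_2$; root $x_1$. For a rooted tree $T$, $T_x$ is the rooted induced subtree of $x$ and its descendants, $h$ denotes height. With $T=G(t)$, $T'=G(t')$: $Y_{t,t'}$ is the largest integer $m$ such that for all $x$, if $h(T_x)\le m$ or $h(T'_x)\le m$ then $T_x=T'_x$. A strongly connected component (SCC) is trivial if it is a single vertex without a loop, nontrivial otherwise. A path $v_0\to\dots\to v_\ell$ is an outlet from a nontrivial SCC $K$ if $v_0\in K$ and $v_1,\dots,v_\ell$ lie in trivial SCCs. $O_G$ is the maximal length of an outlet ($\infty$ if unbounded, $-\infty$ if none). *)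

theory Defs
  imports Complex_Main "HOL-Library.Extended_Real"
begin

datatype bterm = Var nat | App bterm bterm

primrec leaves :: "bterm \<Rightarrow> nat list" where
  "leaves (Var i) = [i]"
| "leaves (App a b) = leaves a @ leaves b"

primrec leftmost :: "bterm \<Rightarrow> nat" where
  "leftmost (Var i) = i"
| "leftmost (App a b) = leftmost a"

definition B :: "nat \<Rightarrow> bterm set" where
  "B n = {t. leaves t = [1..<n+1]}"

primrec tedges :: "bterm \<Rightarrow> (nat \<times> nat) set" where
  "tedges (Var i) = {}"
| "tedges (App a b) = tedges a \<union> tedges b \<union> {(leftmost a, leftmost b)}"

definition tverts :: "bterm \<Rightarrow> nat set" where
  "tverts t = set (leaves t)"

definition desc :: "bterm \<Rightarrow> nat \<Rightarrow> nat set" where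
  "desc t x = {y. (x, y) \<in> (tedges t)\<^sup>*}"

definition subtree :: "bterm \<Rightarrow> nat \<Rightarrow> nat set \<times> (nat \<times> nat) set" where
  "subtree t x = (desc t x, tedges t \<inter> (desc t x \<times> desc t x))"

definition height :: "bterm \<Rightarrow> nat \<Rightarrow> nat" where
  "height t x = (GREATEST k. \<exists>y. (x, y) \<in> (tedges t) ^^ k)"

definition Y :: "bterm \<Rightarrow> bterm \<Rightarrow> int" where
  "Y t t' = (GREATEST m::int. \<forall>x \<in> tverts t.
       (int (height t x) \<le> m \<or> int (height t' x) \<le> m) \<longrightarrow> subtree t x = subtree t' x)"

text \<open>Carrier V \<union> {\<infinity>} is represented as Some ` V \<union> {None}, with None = \<infinity>.\<close>
fun gmult :: "('v \<times> 'v) set \<Rightarrow> 'v option \<Rightarrow> 'v option \<Rightarrow> 'v option" where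
  "gmult E (Some x) (Some y) = (if (x, y) \<in> E then Some x else None)"
| "gmult E _ _ = None"

primrec eval :: "('v \<times> 'v) set \<Rightarrow> (nat \<Rightarrow> 'v option) \<Rightarrow> bterm \<Rightarrow> 'v option" where
  "eval E \<sigma> (Var i) = \<sigma> i"
| "eval E \<sigma> (App a b) = gmult E (eval E \<sigma> a) (eval E \<sigma> b)"

definition satisfies :: "'v set \<Rightarrow> ('v \<times> 'v) set \<Rightarrow> bterm \<Rightarrow> bterm \<Rightarrow> bool" where
  "satisfies V E t t' \<longleftrightarrow>
     (\<forall>\<sigma>. (\<forall>i. \<sigma> i \<in> Some ` V \<union> {None}) \<longrightarrow> eval E \<sigma> t = eval E \<sigma> t')"

definition is_scc :: "'v set \<Rightarrow> ('v \<times> 'v) set \<Rightarrow> 'v set \<Rightarrow> bool" where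
  "is_scc V E K \<longleftrightarrow> K \<noteq> {} \<and> K \<subseteq> V \<and>
     (\<forall>u \<in> K. K = {v \<in> V. (u, v) \<in> E\<^sup>* \<and> (v, u) \<in> E\<^sup>*})"

definition trivial_scc :: "('v \<times> 'v) set \<Rightarrow> 'v set \<Rightarrow> bool" where
  "trivial_scc E K \<longleftrightarrow> (\<exists>v. K = {v} \<and> (v, v) \<notin> E)"

definition nontrivial_scc :: "'v set \<Rightarrow> ('v \<times> 'v) set \<Rightarrow> 'v set \<Rightarrow> bool" where
  "nontrivial_scc V E K \<longleftrightarrow> is_scc V E K \<and> \<not> trivial_scc E K"

definition in_trivial_scc :: "'v set \<Rightarrow> ('v \<times> 'v) set \<Rightarrow> 'v \<Rightarrow> bool" where
  "in_trivial_scc V E v \<longleftrightarrow> (\<exists>K. is_scc V E K \<and> trivial_scc E K \<and> v \<in> K)"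

text \<open>A path v_0 -> ... -> v_l is a nonempty vertex list; its length is l.\<close>
definition is_path :: "'v set \<Rightarrow> ('v \<times> 'v) set \<Rightarrow> 'v list \<Rightarrow> bool" where
  "is_path V E vs \<longleftrightarrow> vs \<noteq> [] \<and> set vs \<subseteq> V \<and>
     (\<forall>i. Suc i < length vs \<longrightarrow> (vs ! i, vs ! Suc i) \<in> E)"

definition is_outlet :: "'v set \<Rightarrow> ('v \<times> 'v) set \<Rightarrow> 'v set \<Rightarrow> 'v list \<Rightarrow> bool" where
  "is_outlet V E K vs \<longleftrightarrow> nontrivial_scc V E K \<and> is_path V E vs \<and> hd vs \<in> K \<and>
     (\<forall>v \<in> set (tl vs). in_trivial_scc V E v)"

text \<open>O_G: supremum of outlet lengths; -\<infinity> if there is none, \<infinity> if unbounded.\<close>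
definition O_G :: "'v set \<Rightarrow> ('v \<times> 'v) set \<Rightarrow> ereal" where
  "O_G V E = Sup {ereal (real (length vs - 1)) | vs K. is_outlet V E K vs}"

end

theory Submission
  imports Defs
begin

abbreviation SW :: "bterm \<Rightarrow> bool" where "SW t \<equiv> sorted_wrt (<) (leaves t)"

lemma leftmost_in: "leftmost t \<in> set (leaves t)"
  by (induction t) auto

lemma leftmost_hd: "leftmost t = hd (leaves t)"
proof (induction t)
  case (App a b)
  have "leaves a \<noteq> []" using leftmost_in[of a] by auto
  then show ?case using App by simp
qed simp

lemma leftmost_min: "SW t \<Longrightarrow> v \<in> set (leaves t) \<Longrightarrow> leftmost t \<le> v"
proof (induction t)
  case (App a b)
  then show ?case using leftmost_in[of a] by (auto simp: sorted_wrt_append) (meson less_imp_le)+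
qed simp

lemma tedges_in: "(u, v) \<in> tedges t \<Longrightarrow> u \<in> set (leaves t) \<and> v \<in> set (leaves t)"
  by (induction t) (auto simp: leftmost_in)

lemma tedges_less: "SW t \<Longrightarrow> (u, v) \<in> tedges t \<Longrightarrow> u < v"
proof (induction t)
  case (App a b)
  then show ?case using leftmost_in[of a] leftmost_in[of b] by (auto simp: sorted_wrt_append)
qed simp

lemma tedges_parent: "SW t \<Longrightarrow> (u, v) \<in> tedges t \<Longrightarrow> (u', v) \<in> tedges t \<Longrightarrow> u = u'"
proof (induction t)
  case (App a b)
  have sa: "SW a" and sb: "SW b" and ab: "\<forall>x\<in>set (leaves a). \<forall>y\<in>set (leaves b). x < y"
    using App.prems(1) by (auto simp: sorted_wrt_append)
  have noin: "(x, leftmost b) \<notin> tedges b" for x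
    using tedges_less[OF sb, of x "leftmost b"] tedges_in[of x "leftmost b" b] leftmost_min[OF sb, of x] by auto
  have dis: "x \<in> set (leaves a) \<Longrightarrow> x \<in> set (leaves b) \<Longrightarrow> False" for x using ab by blast
  from App.prems(2,3) show ?case
    using App.IH(1)[OF sa] App.IH(2)[OF sb] noin tedges_in[of _ _ a] tedges_in[of _ _ b] leftmost_in[of b] dis
    by simp metis
qed simp

lemma rtrancl_le: assumes "SW t" "(u, v) \<in> (tedges t)\<^sup>*" shows "u \<le> v"
  using assms(2) by (induction rule: rtrancl_induct) (auto dest: tedges_less[OF assms(1)])

lemma relpow_bound: "SW t \<Longrightarrow> (u, v) \<in> (tedges t) ^^ k \<Longrightarrow> u + k \<le> v \<and> (k > 0 \<longrightarrow> v \<in> set (leaves t))"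
proof (induction k arbitrary: v)
  case (Suc k)
  then obtain w where "(u, w) \<in> tedges t ^^ k" "(w, v) \<in> tedges t" by auto
  then show ?case using Suc tedges_less[OF Suc.prems(1)] tedges_in by fastforce
qed simp

primrec dep :: "bterm \<Rightarrow> nat \<Rightarrow> nat" where
  "dep (Var i) v = 0"
| "dep (App a b) v = (if v \<in> set (leaves a) then dep a v else Suc (dep b v))"

lemma dep_leftmost: "dep t (leftmost t) = 0"
  by (induction t) (auto simp: leftmost_in)

lemma dep_edge: "SW t \<Longrightarrow> (u, v) \<in> tedges t \<Longrightarrow> dep t v = Suc (dep t u)"
proof (induction t)
  case (App a b)
  have sa: "SW a" and sb: "SW b" and ab: "\<forall>x\<in>set (leaves a). \<forall>y\<in>set (leaves b). x < y"
    using App.prems(1) by (auto simp: sorted_wrt_append)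
  have dis: "x \<in> set (leaves a) \<Longrightarrow> x \<notin> set (leaves b)" for x using ab by blast
  have dis2: "x \<in> set (leaves b) \<Longrightarrow> x \<notin> set (leaves a)" for x using ab by blast
  from App.prems(2) consider "(u, v) \<in> tedges a" | "(u, v) \<in> tedges b" | "u = leftmost a" "v = leftmost b" by auto
  then show ?case
  proof cases
    case 1 then show ?thesis using App.IH(1)[OF sa] tedges_in[of u v a] by simp
  next
    case 2 then show ?thesis using App.IH(2)[OF sb] tedges_in[of u v b] dis2 by simp
  next
    case 3 then show ?thesis using leftmost_in[of a] leftmost_in[of b] dis2 dep_leftmost[of a] dep_leftmost[of b] by simp
  qed
qed simp

lemma dep_relpow: "SW t \<Longrightarrow> (u, v) \<in> (tedges t) ^^ k \<Longrightarrow> dep t v = dep t u + k"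
proof (induction k arbitrary: v)
  case (Suc k)
  then obtain w where "(u, w) \<in> tedges t ^^ k" "(w, v) \<in> tedges t" by auto
  then show ?case using Suc dep_edge by fastforce
qed simp

lemma eval_hom: "eval E (\<lambda>i. Some (\<phi> i)) t =
  (if \<forall>(a, b) \<in> tedges t. (\<phi> a, \<phi> b) \<in> E then Some (\<phi> (leftmost t)) else None)"
  by (induction t) auto

lemma B_SW: "t \<in> B n \<Longrightarrow> SW t"
proof -
  assume "t \<in> B n"
  then have "leaves t = [1..<n+1]" by (simp add: B_def)
  then show ?thesis by (simp only: sorted_wrt_upt)
qed

lemma B_tverts: "t \<in> B n \<Longrightarrow> tverts t = {1..n}"
  by (auto simp: B_def tverts_def)

lemma relpow_le_n: assumes "t \<in> B n" "(u, v) \<in> (tedges t) ^^ k" shows "k \<le> n"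
proof (cases "k = 0")
  case False
  then have "u + k \<le> v" "v \<in> set (leaves t)" using relpow_bound[OF B_SW[OF assms(1)] assms(2)] by auto
  then show ?thesis using assms(1) by (auto simp: B_def)
qed simp

lemma height_ge: assumes "t \<in> B n" "(u, v) \<in> (tedges t) ^^ k" shows "k \<le> height t u"
  unfolding height_def
  by (rule Greatest_le_nat[where b = n]) (use assms relpow_le_n in blast)+

lemma height_path: assumes "t \<in> B n" shows "\<exists>v. (u, v) \<in> (tedges t) ^^ height t u"
  unfolding height_def
  by (rule GreatestI_nat[where k = 0 and b = n]) (use assms relpow_le_n in auto)

lemma height_le_n: assumes "t \<in> B n" shows "height t u \<le> n"
  using height_path[OF assms, of u] relpow_le_n[OF assms] by blast

lemma height_child: assumes "t \<in> B n" "(x, c) \<in> tedges t" shows "height t c < height t x"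
proof -
  obtain v where "(c, v) \<in> (tedges t) ^^ height t c" using height_path[OF assms(1)] by blast
  then have "(x, v) \<in> (tedges t) ^^ Suc (height t c)" using assms(2) by (rule relpow_Suc_I2[rotated])
  then show ?thesis using height_ge[OF assms(1)] by fastforce
qed

lemma leaves_ne: "leaves t \<noteq> []"
  using leftmost_in[of t] by auto

lemma split_restr:
  "P1 \<subseteq> X \<times> X \<Longrightarrow> P2 \<inter> (X \<times> X) = {} \<Longrightarrow> p \<notin> X \<times> X \<Longrightarrow> P1 = (P2 \<union> P1 \<union> {p}) \<inter> (X \<times> X)"
  "P1 \<subseteq> X \<times> X \<Longrightarrow> P2 \<inter> (X \<times> X) = {} \<Longrightarrow> p \<notin> X \<times> X \<Longrightarrow> P1 = (P1 \<union> P2 \<union> {p}) \<inter> (X \<times> X)"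
  by blast+

lemma app_facts:
  assumes sw: "SW (App a b)"
  shows "SW a" "SW b" "\<forall>x\<in>set (leaves a). \<forall>y\<in>set (leaves b). x < y"
    "(leftmost a, c) \<in> tedges (App a b) \<Longrightarrow> c \<le> leftmost b"
    "takeWhile (\<lambda>v. v < leftmost b) (leaves (App a b)) = leaves a"
    "tedges a = tedges (App a b) \<inter> (set (leaves a) \<times> set (leaves a))"
    "tedges b = tedges (App a b) \<inter> (set (leaves b) \<times> set (leaves b))"
proof -
  show sa: "SW a" and sb: "SW b" and ab: "\<forall>x\<in>set (leaves a). \<forall>y\<in>set (leaves b). x < y"
    using sw by (simp_all add: sorted_wrt_append)
  have dis: "x \<in> set (leaves a) \<Longrightarrow> x \<in> set (leaves b) \<Longrightarrow> False" for x
    using ab by blast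
  have la: "leftmost a \<in> set (leaves a)" and lb: "leftmost b \<in> set (leaves b)"
    by (rule leftmost_in)+
  show "c \<le> leftmost b" if e: "(leftmost a, c) \<in> tedges (App a b)"
  proof -
    consider "(leftmost a, c) \<in> tedges a" | "(leftmost a, c) \<in> tedges b" | "c = leftmost b"
      using e unfolding tedges.simps(2) by blast
    then show ?thesis
    proof cases
      case 1
      then have "c \<in> set (leaves a)" using tedges_in by blast
      then show ?thesis using ab lb by (meson less_imp_le)
    next
      case 2
      then have "leftmost a \<in> set (leaves b)" using tedges_in by blast
      then show ?thesis using dis la by blast
    qed simp
  qed
  have hb: "leaves b = leftmost b # tl (leaves b)"
    using leftmost_hd[of b] leaves_ne[of b] by simp
  show "takeWhile (\<lambda>v. v < leftmost b) (leaves (App a b)) = leaves a"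
  proof -
    have "takeWhile (\<lambda>v. v < leftmost b) (leaves a @ leaves b) = leaves a @ takeWhile (\<lambda>v. v < leftmost b) (leaves b)"
      by (rule takeWhile_append2) (use ab lb in blast)
    moreover have "takeWhile (\<lambda>v. v < leftmost b) (leaves b) = []"
      by (subst hb) simp
    ultimately show ?thesis by simp
  qed
  have ina: "tedges a \<subseteq> set (leaves a) \<times> set (leaves a)" using tedges_in by fast
  have inb: "tedges b \<subseteq> set (leaves b) \<times> set (leaves b)" using tedges_in by fast
  have d1: "tedges b \<inter> (set (leaves a) \<times> set (leaves a)) = {}" using inb dis by fast
  have d2: "(leftmost a, leftmost b) \<notin> set (leaves a) \<times> set (leaves a)" using lb dis by fast
  show "tedges a = tedges (App a b) \<inter> (set (leaves a) \<times> set (leaves a))"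
    unfolding tedges.simps(2) by (rule split_restr(2)[OF ina d1 d2])
  have d3: "tedges a \<inter> (set (leaves b) \<times> set (leaves b)) = {}" using ina dis by fast
  have d4: "(leftmost a, leftmost b) \<notin> set (leaves b) \<times> set (leaves b)" using la dis by fast
  show "tedges b = tedges (App a b) \<inter> (set (leaves b) \<times> set (leaves b))"
    unfolding tedges.simps(2) by (rule split_restr(1)[OF inb d3 d4])
qed

lemma tedges_inj: "leaves s = leaves s' \<Longrightarrow> SW s \<Longrightarrow> tedges s = tedges s' \<Longrightarrow> s = s'"
proof (induction s arbitrary: s')
  case (Var i)
  then show ?case by (cases s') (auto simp: leaves_ne)
next
  case (App a b)
  obtain a' b' where s': "s' = App a' b'"
    using App.prems(1) leaves_ne[of a] leaves_ne[of b] by (cases s') (auto simp: append_eq_Cons_conv)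
  have SW': "SW (App a' b')" using App.prems(1,2) s' by simp
  note F = app_facts[OF App.prems(2)] and F' = app_facts[OF SW']
  have tE: "tedges (App a b) = tedges (App a' b')" using App.prems(3) unfolding s' .
  have lE: "leaves (App a b) = leaves (App a' b')" using App.prems(1) unfolding s' .
  have r: "leftmost a = leftmost a'"
    using lE leftmost_hd[of "App a b"] leftmost_hd[of "App a' b'"] by simp
  have lb: "leftmost b = leftmost b'"
  proof -
    have "(leftmost a', leftmost b') \<in> tedges (App a' b')" by simp
    then have "(leftmost a, leftmost b') \<in> tedges (App a b)" using tE r by (simp only:)
    moreover have "(leftmost a, leftmost b) \<in> tedges (App a b)" by simp
    then have "(leftmost a', leftmost b) \<in> tedges (App a' b')" using tE r by (simp only:)
    ultimately show ?thesis using F(4) F'(4) by (meson le_antisym)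
  qed
  have la: "leaves a = leaves a'" using F(5) F'(5) lE lb by metis
  have lbb: "leaves b = leaves b'" using lE la by simp
  have "tedges a = tedges a'" using F(6) F'(6) tE la by metis
  then have "a = a'" using App.IH(1)[OF la F(1)] by blast
  moreover have "tedges b = tedges b'" using F(7) F'(7) tE lbb by metis
  then have "b = b'" using App.IH(2)[OF lbb F(2)] by blast
  ultimately show ?case using s' by simp
qed

lemma Y_props:
  assumes t: "t \<in> B n" and t': "t' \<in> B n" and ne: "t \<noteq> t'"
  shows "Y t t' \<ge> -1 \<and> (\<exists>x\<in>tverts t. (int (height t x) \<le> Y t t' + 1 \<or> int (height t' x) \<le> Y t t' + 1)
          \<and> subtree t x \<noteq> subtree t' x)"
proof -
  define P where "P = (\<lambda>m::int. \<forall>x \<in> tverts t.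
       (int (height t x) \<le> m \<or> int (height t' x) \<le> m) \<longrightarrow> subtree t x = subtree t' x)"
  have Pm1: "P (-1)" unfolding P_def by auto
  have tv: "tverts t' = tverts t" using B_tverts[OF t] B_tverts[OF t'] by simp
  have bnd: "m < int n" if "P m" for m
  proof (rule ccontr)
    assume "\<not> m < int n"
    then have all: "\<forall>x\<in>tverts t. subtree t x = subtree t' x"
    proof (intro ballI)
      fix x assume "x \<in> tverts t"
      have "int (height t x) \<le> m" using height_le_n[OF t, of x] \<open>\<not> m < int n\<close> by linarith
      then show "subtree t x = subtree t' x" using that \<open>x \<in> tverts t\<close> unfolding P_def by blast
    qed
    have sub: "(a, b) \<in> tedges r" if "\<forall>x\<in>tverts s. subtree s x = subtree r x" "(a, b) \<in> tedges s" for s r a b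
    proof -
      have "a \<in> tverts s" using that(2) tedges_in by (auto simp: tverts_def)
      moreover have "(a, b) \<in> snd (subtree s a)" using that(2) by (auto simp: subtree_def desc_def)
      ultimately have "(a, b) \<in> snd (subtree r a)" using that(1) by metis
      then show ?thesis by (simp add: subtree_def)
    qed
    have all': "\<forall>x\<in>tverts t'. subtree t' x = subtree t x" using all tv by simp
    have "tedges t = tedges t'"
      using sub[of t t', OF all] sub[of t' t, OF all'] by auto
    moreover have "leaves t = leaves t'" using t t' by (simp add: B_def)
    ultimately have "t = t'" using tedges_inj B_SW[OF t] by blast
    with ne show False ..
  qed
  define M where "M = Max {m \<in> {-1..int n}. P m}"
  have fin: "finite {m \<in> {-1..int n}. P m}" by (rule finite_subset[of _ "{-1..int n}"]) auto
  have m1in: "-1 \<in> {m \<in> {-1..int n}. P m}" using Pm1 bnd[OF Pm1] by simp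
  have "M \<in> {m \<in> {-1..int n}. P m}" unfolding M_def by (rule Max_in[OF fin]) (use m1in in blast)
  then have PM: "P M" by simp
  have Mm1: "-1 \<le> M" unfolding M_def using fin m1in by (rule Max_ge)
  have Mge: "m \<le> M" if "P m" for m
  proof (cases "m < -1")
    case True
    then show ?thesis using Mm1 by simp
  next
    case False
    then have "m \<in> {m \<in> {-1..int n}. P m}" using that bnd[OF that] by simp
    then show ?thesis unfolding M_def using fin by (rule Max_ge[rotated])
  qed
  have YM: "Y t t' = M" unfolding Y_def P_def[symmetric]
    by (rule Greatest_equality) (use PM Mge in auto)
  have "\<not> P (M + 1)"
  proof
    assume "P (M + 1)"
    then have "M + 1 \<le> M" by (rule Mge)
    then show False by simp
  qed
  moreover have "M \<ge> -1" using Mm1 .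
  ultimately show ?thesis unfolding YM P_def by blast
qed

lemma triv_no_back:
  assumes EV: "E \<subseteq> V \<times> V" and tr: "in_trivial_scc V E v" and e: "(v, w) \<in> E" and r: "(w, v) \<in> E\<^sup>*"
  shows False
proof -
  obtain K where K: "is_scc V E K" "trivial_scc E K" "v \<in> K" using tr by (auto simp: in_trivial_scc_def)
  then have Kv: "K = {v}" "(v, v) \<notin> E" by (auto simp: trivial_scc_def)
  have "K = {x \<in> V. (v, x) \<in> E\<^sup>* \<and> (x, v) \<in> E\<^sup>*}" using K(1,3) by (auto simp: is_scc_def)
  moreover have "w \<in> V" using e EV by auto
  ultimately have "w \<in> K" using e r by auto
  then show False using Kv e by auto
qed

lemma nontriv_cycle:
  assumes "nontrivial_scc V E K" "v0 \<in> K"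
  shows "(v0, v0) \<in> E\<^sup>+"
proof (cases "(v0, v0) \<in> E")
  case True then show ?thesis by auto
next
  case False
  have sc: "K = {x \<in> V. (v0, x) \<in> E\<^sup>* \<and> (x, v0) \<in> E\<^sup>*}" and nt: "\<not> trivial_scc E K"
    using assms by (auto simp: nontrivial_scc_def is_scc_def)
  have "K \<noteq> {v0}" using nt False by (auto simp: trivial_scc_def)
  then obtain u where u: "u \<in> K" "u \<noteq> v0" using assms(2) by blast
  then have "(v0, u) \<in> E\<^sup>+" "(u, v0) \<in> E\<^sup>*" using sc by (auto simp: rtrancl_eq_or_trancl)
  then show ?thesis by auto
qed

lemma periodic_walk:
  assumes cyc: "(v0, v0) \<in> E\<^sup>+" and EV: "E \<subseteq> V \<times> V"
  obtains p F where "p > 0" "\<forall>i. (F i, F (Suc i)) \<in> E" "\<forall>i. F i \<in> V" "\<forall>i. (F i, v0) \<in> E\<^sup>*"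
    "\<forall>k. F (p * k) = v0"
proof -
  obtain p where p: "p > 0" "(v0, v0) \<in> E ^^ p" using cyc trancl_power by blast
  then obtain w where w: "w 0 = v0" "w p = v0" "\<forall>i<p. (w i, w (Suc i)) \<in> E"
    using relpow_fun_conv by metis
  define F where "F i = w (i mod p)" for i
  have step: "(F i, F (Suc i)) \<in> E" for i
  proof -
    have j: "i mod p < p" using p by simp
    show ?thesis
    proof (cases "Suc (i mod p) = p")
      case True
      then have "Suc i mod p = 0" by (simp add: mod_Suc)
      then show ?thesis using w j True unfolding F_def by metis
    next
      case False
      then have "Suc i mod p = Suc (i mod p)" by (simp add: mod_Suc)
      then show ?thesis using w j unfolding F_def by simp
    qed
  qed
  have inV: "F i \<in> V" for i using step[of i] EV by auto
  have reach: "(w (p - d), v0) \<in> E\<^sup>*" if "d \<le> p" for d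
    using that
  proof (induction d)
    case 0 then show ?case using w by simp
  next
    case (Suc d)
    then have "(w (p - Suc d), w (Suc (p - Suc d))) \<in> E" using w p by simp
    moreover have "Suc (p - Suc d) = p - d" using Suc by simp
    ultimately show ?case using Suc by (metis Suc_leD converse_rtrancl_into_rtrancl)
  qed
  have "(F i, v0) \<in> E\<^sup>*" for i
  proof -
    have "i mod p = p - (p - i mod p)" "p - i mod p \<le> p" using p by auto
    then show ?thesis using reach unfolding F_def by metis
  qed
  moreover have "F (p * k) = v0" for k unfolding F_def using w by simp
  ultimately show ?thesis using that p step inV by blast
qed

lemma L_lemma:
  fixes R R2 :: bterm and z :: nat and l :: nat
  assumes EV: "E \<subseteq> V \<times> V" and R: "R \<in> B n"
    and sat: "satisfies V E R R2"
    and p: "p > 0" and F: "\<forall>i. (F i, F (Suc i)) \<in> E" "\<forall>i. F i \<in> V" "\<forall>i. (F i, v0) \<in> E\<^sup>*" "\<forall>k. F (p * k) = v0"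
    and v: "v 0 = v0" "\<forall>i<l. (v i, v (Suc i)) \<in> E" "\<forall>i\<le>l. v i \<in> V"
       "\<forall>i. 1 \<le> i \<longrightarrow> i \<le> l \<longrightarrow> in_trivial_scc V E (v i)" "\<forall>i\<le>l. (v0, v i) \<in> E\<^sup>*"
    and h: "height R z + 1 \<le> l"
    and ab: "(a, b) \<in> tedges R2" "a \<in> desc R z"
  shows "b \<in> desc R z"
proof (rule ccontr)
  assume bZ: "b \<notin> desc R z"
  define Z where "Z = desc R z"
  have sw: "SW R" using B_SW[OF R] .
  have idx: "dep R z \<le> dep R y \<and> dep R y - dep R z \<le> height R z" if "y \<in> Z" for y
  proof -
    have "(z, y) \<in> (tedges R)\<^sup>*" using that by (simp add: Z_def desc_def)
    then obtain k where k: "(z, y) \<in> (tedges R) ^^ k" using rtrancl_power by blast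
    show ?thesis using dep_relpow[OF sw k] height_ge[OF R k] by simp
  qed
  define s where "s = p * dep R z + 1 - dep R z"
  define \<phi> where "\<phi> y = (if y \<in> Z then v (dep R y - dep R z + 1) else F (dep R y + s))" for y
  have \<phi>V: "\<phi> y \<in> V" for y
    using idx[of y] h v(3) F(2) unfolding \<phi>_def by auto
  have hom: "(\<phi> u, \<phi> w) \<in> E" if e: "(u, w) \<in> tedges R" for u w
  proof -
    have dw: "dep R w = Suc (dep R u)" using dep_edge[OF sw e] .
    consider "u \<in> Z" "w \<in> Z" | "u \<in> Z" "w \<notin> Z" | "u \<notin> Z" "w \<notin> Z" | "u \<notin> Z" "w \<in> Z" by blast
    then show ?thesis
    proof cases
      case 1
      have "dep R u - dep R z + 1 < l" "Suc (dep R u - dep R z + 1) = dep R w - dep R z + 1"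
        using idx[OF 1(1)] idx[OF 1(2)] dw h by auto
      then have lt: "dep R u - dep R z + 1 < l" and eq: "Suc (dep R u - dep R z + 1) = dep R w - dep R z + 1" by blast+
      have "\<phi> u = v (dep R u - dep R z + 1)" using 1 unfolding \<phi>_def by simp
      moreover have "\<phi> w = v (Suc (dep R u - dep R z + 1))" using 1 eq unfolding \<phi>_def by simp
      ultimately show ?thesis using v(2) lt by simp
    next
      case 2
      have "(z, u) \<in> (tedges R)\<^sup>*" using 2(1) by (simp add: Z_def desc_def)
      then have "(z, w) \<in> (tedges R)\<^sup>*" using e by (rule rtrancl_into_rtrancl)
      then have "w \<in> Z" by (simp add: Z_def desc_def)
      then show ?thesis using 2(2) by contradiction
    next
      case 3
      have "\<phi> u = F (dep R u + s)" "\<phi> w = F (Suc (dep R u + s))" using 3 dw unfolding \<phi>_def by simp_all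
      then show ?thesis using F(1) by simp
    next
      case 4
      have wz: "w = z"
      proof (rule ccontr)
        assume "w \<noteq> z"
        moreover have "(z, w) \<in> (tedges R)\<^sup>*" using 4 by (simp add: Z_def desc_def)
        ultimately obtain q where "(z, q) \<in> (tedges R)\<^sup>*" "(q, w) \<in> tedges R"
          by (metis rtranclE)
        then have "q = u" "q \<in> Z" using tedges_parent[OF sw _ e] by (simp_all add: Z_def desc_def)
        then show False using 4 by simp
      qed
      have le: "dep R z \<le> p * dep R z" using p by simp
      have dz: "dep R z = Suc (dep R u)" using dw wz by simp
      have "dep R u + s = p * dep R z" unfolding s_def using le dz by linarith
      then have "\<phi> u = v 0" using 4 F(4) v(1) unfolding \<phi>_def by simp
      moreover have "\<phi> w = v 1" using 4 wz unfolding \<phi>_def by simp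
      moreover have "0 < l" using h by simp
      ultimately show ?thesis using v(2) by simp
    qed
  qed
  have homall: "\<forall>(u, w) \<in> tedges R. (\<phi> u, \<phi> w) \<in> E" using hom by blast
  have "eval E (\<lambda>i. Some (\<phi> i)) R \<noteq> None" using homall by (simp add: eval_hom)
  moreover have "eval E (\<lambda>i. Some (\<phi> i)) R = eval E (\<lambda>i. Some (\<phi> i)) R2"
    using sat \<phi>V unfolding satisfies_def by auto
  ultimately have hom2: "\<forall>(u, w) \<in> tedges R2. (\<phi> u, \<phi> w) \<in> E"
    by (simp add: eval_hom split: if_splits)
  have aZ: "a \<in> Z" "b \<notin> Z" using ab bZ by (auto simp: Z_def)
  define i where "i = dep R a - dep R z + 1"
  have i: "1 \<le> i" "i \<le> l" using idx[OF aZ(1)] h unfolding i_def by auto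
  have "(v i, F (dep R b + s)) \<in> E" using hom2 ab(1) aZ unfolding \<phi>_def i_def by fastforce
  moreover have "(F (dep R b + s), v i) \<in> E\<^sup>*" using F(3) v(5) i by (meson rtrancl_trans)
  ultimately show False using triv_no_back[OF EV] v(4) i by blast
qed

lemma closed_desc:
  assumes "\<forall>a b. (a, b) \<in> tedges R \<longrightarrow> a \<in> A \<longrightarrow> b \<in> A" "x \<in> A"
  shows "desc R x \<subseteq> A"
proof
  fix y assume "y \<in> desc R x"
  then have "(x, y) \<in> (tedges R)\<^sup>*" by (simp add: desc_def)
  then show "y \<in> A" by (induction rule: rtrancl_induct) (use assms in auto)
qed

lemma path_transfer:
  assumes "Restr R1 D \<subseteq> R2" "\<forall>a b. (a, b) \<in> R1 \<longrightarrow> a \<in> D \<longrightarrow> b \<in> D" "u \<in> D"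
  shows "(u, y) \<in> R1 ^^ j \<Longrightarrow> (u, y) \<in> R2 ^^ j \<and> y \<in> D"
proof (induction j arbitrary: y)
  case 0 then show ?case using assms by simp
next
  case (Suc j)
  then obtain y' where y': "(u, y') \<in> R1 ^^ j" "(y', y) \<in> R1" by auto
  then have "(u, y') \<in> R2 ^^ j" "y' \<in> D" using Suc.IH by auto
  moreover have "y \<in> D" using y' assms(2) \<open>y' \<in> D\<close> by blast
  moreover have "(y', y) \<in> R2" using assms(1) y'(2) \<open>y' \<in> D\<close> \<open>y \<in> D\<close> by blast
  ultimately show ?case by auto
qed

lemma desc_trans: "b \<in> desc R a \<Longrightarrow> c \<in> desc R b \<Longrightarrow> c \<in> desc R a"
  by (auto simp: desc_def)

lemma edges_sub:
  assumes R1: "R1 \<in> B n" and R2: "R2 \<in> B n" and dd: "desc R1 x = desc R2 x"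
    and ch: "\<forall>c. (x, c) \<in> tedges R1 \<longrightarrow> subtree R1 c = subtree R2 c"
    and e: "(a, b) \<in> tedges R1" "a \<in> desc R1 x" "b \<in> desc R1 x"
  shows "(a, b) \<in> tedges R2"
proof -
  have sw1: "SW R1" and sw2: "SW R2" using B_SW R1 R2 by auto
  have chd: "desc R1 c = desc R2 c" "Restr (tedges R1) (desc R1 c) = Restr (tedges R2) (desc R2 c)"
    if "(x, c) \<in> tedges R1" for c
  proof -
    have "subtree R1 c = subtree R2 c" using ch that by blast
    then have "fst (subtree R1 c) = fst (subtree R2 c)" "snd (subtree R1 c) = snd (subtree R2 c)" by simp_all
    then show "desc R1 c = desc R2 c" "Restr (tedges R1) (desc R1 c) = Restr (tedges R2) (desc R2 c)"
      unfolding subtree_def fst_conv snd_conv by blast+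
  qed
  show ?thesis
  proof (cases "a = x")
    case False
    have "(x, a) \<in> (tedges R1)\<^sup>*" using e(2) by (simp add: desc_def)
    then obtain c where c: "(x, c) \<in> tedges R1" "(c, a) \<in> (tedges R1)\<^sup>*"
      using False by (metis converse_rtranclE)
    have "a \<in> desc R1 c" "b \<in> desc R1 c" using c e(1) by (auto simp: desc_def)
    then have "(a, b) \<in> Restr (tedges R1) (desc R1 c)" using e(1) by auto
    then show ?thesis using chd[OF c(1)] by auto
  next
    case True
    have xb: "x < b" using tedges_less[OF sw1 e(1)] True by simp
    have "b \<in> desc R2 x" using e(3) dd by simp
    then have "(x, b) \<in> (tedges R2)\<^sup>*" by (simp add: desc_def)
    then obtain u where u: "(x, u) \<in> tedges R2" "(u, b) \<in> (tedges R2)\<^sup>*"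
      using xb by (metis converse_rtranclE less_irrefl)
    have xu: "x < u" using tedges_less[OF sw2 u(1)] .
    have "u \<in> desc R1 x" using dd u(1) by (auto simp: desc_def)
    then have "(x, u) \<in> (tedges R1)\<^sup>*" by (simp add: desc_def)
    then obtain c where c: "(x, c) \<in> tedges R1" "(c, u) \<in> (tedges R1)\<^sup>*"
      using xu by (metis converse_rtranclE less_irrefl)
    have "u \<in> desc R1 c" using c(2) by (simp add: desc_def)
    then have "u \<in> desc R2 c" using chd(1)[OF c(1)] by simp
    moreover have "b \<in> desc R2 u" using u(2) by (simp add: desc_def)
    ultimately have "b \<in> desc R2 c" by (rule desc_trans)
    then have "b \<in> desc R1 c" using chd(1)[OF c(1)] by simp
    then have cb: "(c, b) \<in> (tedges R1)\<^sup>*" by (simp add: desc_def)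
    have "c = b"
    proof (rule ccontr)
      assume "c \<noteq> b"
      then obtain q where q: "(c, q) \<in> (tedges R1)\<^sup>*" "(q, b) \<in> tedges R1"
        using cb by (metis rtranclE)
      have "q = x" using tedges_parent[OF sw1 q(2)] e(1) True by simp
      moreover have "c \<le> q" using rtrancl_le[OF sw1 q(1)] .
      moreover have "x < c" using tedges_less[OF sw1 c(1)] .
      ultimately show False by simp
    qed
    then have "(b, u) \<in> (tedges R2)\<^sup>*" using \<open>u \<in> desc R2 c\<close> by (simp add: desc_def)
    then have "u = b" using rtrancl_le[OF sw2] u(2) by (meson le_antisym)
    then show ?thesis using u(1) True by simp
  qed
qed

lemma core:
  assumes S: "S \<in> B n" and S2: "S2 \<in> B n"
    and L1: "\<forall>z a b. height S z \<le> L \<longrightarrow> (a, b) \<in> tedges S2 \<longrightarrow> a \<in> desc S z \<longrightarrow> b \<in> desc S z"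
    and L2: "\<forall>z a b. height S2 z \<le> L \<longrightarrow> (a, b) \<in> tedges S \<longrightarrow> a \<in> desc S2 z \<longrightarrow> b \<in> desc S2 z"
    and hx: "height S x = H" "H \<le> L"
    and mn: "\<forall>y \<in> tverts S. (height S y < H \<or> height S2 y < H) \<longrightarrow> subtree S y = subtree S2 y"
  shows "subtree S x = subtree S2 x"
proof -
  have sw: "SW S" "SW S2" using B_SW S S2 by auto
  have tv: "tverts S2 = tverts S" using B_tverts[OF S] B_tverts[OF S2] by simp
  have xin: "x \<in> desc S x" "x \<in> desc S2 x" by (auto simp: desc_def)
  have d1: "desc S2 x \<subseteq> desc S x"
    by (rule closed_desc) (use L1 hx xin in auto)
  have cheq: "subtree S c = subtree S2 c" if "(x, c) \<in> tedges S" for c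
  proof -
    have "c \<in> tverts S" using tedges_in[OF that] by (simp add: tverts_def)
    moreover have "height S c < H" using height_child[OF S that] hx by simp
    ultimately show ?thesis using mn by blast
  qed
  have pathb: "k \<le> H" if "(x, y) \<in> (tedges S2) ^^ k" for k y
  proof (cases k)
    case 0 then show ?thesis by simp
  next
    case (Suc j)
    have "(x, y) \<in> (tedges S2) ^^ Suc j" using that Suc by simp
    then obtain u where u: "(x, u) \<in> tedges S2" "(u, y) \<in> (tedges S2) ^^ j"
      by (blast dest: relpow_Suc_D2)
    have xu: "x < u" using tedges_less[OF sw(2) u(1)] .
    have "u \<in> desc S2 x" using u(1) by (auto simp: desc_def)
    then have "u \<in> desc S x" using d1 by blast
    then have "(x, u) \<in> (tedges S)\<^sup>*" by (simp add: desc_def)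
    then obtain c where c: "(x, c) \<in> tedges S" "(c, u) \<in> (tedges S)\<^sup>*"
      using xu by (metis converse_rtranclE less_irrefl)
    have "fst (subtree S c) = fst (subtree S2 c)" "snd (subtree S c) = snd (subtree S2 c)"
      using cheq[OF c(1)] by simp_all
    then have ce: "desc S c = desc S2 c" "Restr (tedges S) (desc S c) = Restr (tedges S2) (desc S2 c)"
      unfolding subtree_def fst_conv snd_conv by blast+
    have "u \<in> desc S c" using c(2) by (simp add: desc_def)
    then have f3: "u \<in> desc S2 c" using ce(1) by simp
    have f1: "Restr (tedges S2) (desc S2 c) \<subseteq> tedges S" using ce(2) by blast
    have f2: "\<forall>a b. (a, b) \<in> tedges S2 \<longrightarrow> a \<in> desc S2 c \<longrightarrow> b \<in> desc S2 c"
      by (auto simp: desc_def)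
    have "(u, y) \<in> (tedges S) ^^ j" using path_transfer[OF f1 f2 f3 u(2)] by blast
    moreover obtain i where "(c, u) \<in> (tedges S) ^^ i" using c(2) rtrancl_power by blast
    ultimately have "(c, y) \<in> (tedges S) ^^ (i + j)" by (auto simp: relpow_add)
    then have "i + j \<le> height S c" using height_ge[OF S] by blast
    moreover have "height S c < H" using height_child[OF S c(1)] hx by simp
    ultimately show ?thesis using Suc by simp
  qed
  have h2: "height S2 x \<le> H" using height_path[OF S2, of x] pathb by blast
  have d2: "desc S x \<subseteq> desc S2 x"
    by (rule closed_desc) (use L2 h2 hx xin in force)+
  have dd: "desc S x = desc S2 x" using d1 d2 by blast
  have cheq2: "subtree S2 c = subtree S c" if "(x, c) \<in> tedges S2" for c
  proof -
    have "c \<in> tverts S" using tedges_in[OF that] tv by (simp add: tverts_def)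
    moreover have "height S2 c < H" using height_child[OF S2 that] h2 by simp
    ultimately show ?thesis using mn by metis
  qed
  have "Restr (tedges S) (desc S x) \<subseteq> tedges S2"
    using edges_sub[OF S S2 dd] cheq by blast
  moreover have "Restr (tedges S2) (desc S2 x) \<subseteq> tedges S"
    using edges_sub[OF S2 S dd[symmetric]] cheq2 by blast
  ultimately show ?thesis using dd by (auto simp: subtree_def)
qed

theorem lemma6p10:
  fixes V :: "'v set" and E :: "('v \<times> 'v) set" and t t' :: bterm and n :: nat
  assumes "E \<subseteq> V \<times> V"
    and "t \<in> B n" and "t' \<in> B n" and "t \<noteq> t'"
    and "satisfies V E t t'"
  shows "O_G V E \<le> ereal (real_of_int (Y t t' + 1))"
  unfolding O_G_def
proof (rule Sup_least)
  fix r assume "r \<in> {ereal (real (length vs - 1)) | vs K. is_outlet V E K vs}"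
  then obtain vs K where r: "r = ereal (real (length vs - 1))" and out: "is_outlet V E K vs" by blast
  note EV = assms(1) and t = assms(2) and t' = assms(3)
  define l where "l = length vs - 1"
  have sat2: "satisfies V E t' t" using assms(5) unfolding satisfies_def by metis
  obtain x0 where Yge: "Y t t' \<ge> -1" and x0: "x0 \<in> tverts t"
    "int (height t x0) \<le> Y t t' + 1 \<or> int (height t' x0) \<le> Y t t' + 1" "subtree t x0 \<noteq> subtree t' x0"
    using Y_props[OF t t' assms(4)] by blast
  show "r \<le> ereal (real_of_int (Y t t' + 1))"
  proof (rule ccontr)
    assume "\<not> ?thesis"
    then have lY: "int l > Y t t' + 1" unfolding r l_def by simp
    define L where "L = nat (Y t t' + 1)"
    have Ll: "L + 1 \<le> l" using lY Yge unfolding L_def by linarith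
    have nt: "nontrivial_scc V E K" and pth: "is_path V E vs" and hdK: "hd vs \<in> K"
      and trv: "\<forall>v\<in>set (tl vs). in_trivial_scc V E v" using out by (auto simp: is_outlet_def)
    have vne: "vs \<noteq> []" and vV: "set vs \<subseteq> V" and ve: "\<forall>i. Suc i < length vs \<longrightarrow> (vs ! i, vs ! Suc i) \<in> E"
      using pth by (auto simp: is_path_def)
    define v0 where "v0 = vs ! 0"
    have v0K: "v0 \<in> K" using hdK vne by (simp add: v0_def hd_conv_nth)
    obtain p F where pF: "p > 0" "\<forall>i. (F i, F (Suc i)) \<in> E" "\<forall>i. F i \<in> V" "\<forall>i. (F i, v0) \<in> E\<^sup>*"
      "\<forall>k. F (p * k) = v0"
      using periodic_walk[OF nontriv_cycle[OF nt v0K] EV] by blast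
    define v where "v i = vs ! i" for i
    have lenl: "length vs = l + 1" using vne unfolding l_def by (cases vs) auto
    have v1: "v 0 = v0" by (simp add: v_def v0_def)
    have v2: "\<forall>i<l. (v i, v (Suc i)) \<in> E" using ve lenl by (simp add: v_def)
    have v3: "\<forall>i\<le>l. v i \<in> V" using vV lenl by (auto simp: v_def)
    have v4: "\<forall>i. 1 \<le> i \<longrightarrow> i \<le> l \<longrightarrow> in_trivial_scc V E (v i)"
    proof (intro allI impI)
      fix i assume i: "1 \<le> i" "i \<le> l"
      have il: "i - 1 < length (tl vs)" using i lenl by simp
      then have "tl vs ! (i - 1) = vs ! Suc (i - 1)" by (rule nth_tl)
      moreover have "Suc (i - 1) = i" using i by simp
      moreover have "tl vs ! (i - 1) \<in> set (tl vs)" using il by (rule nth_mem)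
      ultimately have "vs ! i \<in> set (tl vs)" by simp
      then show "in_trivial_scc V E (v i)" using trv by (simp add: v_def)
    qed
    have v5: "\<forall>i\<le>l. (v0, v i) \<in> E\<^sup>*"
    proof (intro allI impI)
      fix i show "i \<le> l \<Longrightarrow> (v0, v i) \<in> E\<^sup>*"
      proof (induction i)
        case 0 then show ?case using v1 by simp
      next
        case (Suc i)
        then have "(v i, v (Suc i)) \<in> E" using v2 by simp
        then show ?case using Suc by (meson Suc_leD rtrancl.rtrancl_into_rtrancl)
      qed
    qed
    have hl: "height R z + 1 \<le> l" if "height R z \<le> L" for R z using that Ll by simp
    have LA: "\<forall>z a b. height t z \<le> L \<longrightarrow> (a, b) \<in> tedges t' \<longrightarrow> a \<in> desc t z \<longrightarrow> b \<in> desc t z"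
    proof (intro allI impI)
      fix z a b assume A: "height t z \<le> L" "(a, b) \<in> tedges t'" "a \<in> desc t z"
      show "b \<in> desc t z" by (rule L_lemma[OF EV t assms(5) pF(1,2,3,4,5) v1 v2 v3 v4 v5 hl[OF A(1)] A(2,3)])
    qed
    have LB: "\<forall>z a b. height t' z \<le> L \<longrightarrow> (a, b) \<in> tedges t \<longrightarrow> a \<in> desc t' z \<longrightarrow> b \<in> desc t' z"
    proof (intro allI impI)
      fix z a b assume A: "height t' z \<le> L" "(a, b) \<in> tedges t" "a \<in> desc t' z"
      show "b \<in> desc t' z" by (rule L_lemma[OF EV t' sat2 pF(1,2,3,4,5) v1 v2 v3 v4 v5 hl[OF A(1)] A(2,3)])
    qed
    have tv: "tverts t' = tverts t" using B_tverts[OF t] B_tverts[OF t'] by simp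
    define Q where "Q k = (\<exists>y\<in>tverts t. subtree t y \<noteq> subtree t' y \<and> (height t y = k \<or> height t' y = k))" for k
    define H where "H = (LEAST k. Q k)"
    obtain k0 where k0: "Q k0" "k0 \<le> L"
    proof (cases "int (height t x0) \<le> Y t t' + 1")
      case True
      have "Q (height t x0)" unfolding Q_def using x0 by blast
      moreover have "height t x0 \<le> L" using True Yge unfolding L_def by (simp add: le_nat_iff)
      ultimately show ?thesis by (rule that)
    next
      case False
      then have F: "int (height t' x0) \<le> Y t t' + 1" using x0 by simp
      have "Q (height t' x0)" unfolding Q_def using x0 by blast
      moreover have "height t' x0 \<le> L" using F Yge unfolding L_def by (simp add: le_nat_iff)
      ultimately show ?thesis by (rule that)
    qed
    have QH: "Q H" using k0 LeastI unfolding H_def by metis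
    have HL: "H \<le> L" using Least_le[of Q k0] k0 unfolding H_def by simp
    obtain x where x: "x \<in> tverts t" "subtree t x \<noteq> subtree t' x" "height t x = H \<or> height t' x = H"
      using QH unfolding Q_def by blast
    have mn: "\<forall>y \<in> tverts t. (height t y < H \<or> height t' y < H) \<longrightarrow> subtree t y = subtree t' y"
    proof (intro ballI impI)
      fix y assume y: "y \<in> tverts t" "height t y < H \<or> height t' y < H"
      show "subtree t y = subtree t' y"
      proof (rule ccontr)
        assume ne: "subtree t y \<noteq> subtree t' y"
        show False
        proof (cases "height t y < H")
          case True
          then have "Q (height t y)" using y ne unfolding Q_def by blast
          then show False using True not_less_Least unfolding H_def by blast
        next
          case False
          then have "height t' y < H" using y by simp
          moreover have "Q (height t' y)" using y ne unfolding Q_def by blast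
          ultimately show False using not_less_Least unfolding H_def by blast
        qed
      qed
    qed
    show False
    proof (cases "height t x = H")
      case True
      show False using core[OF t t' LA LB True HL mn] x by simp
    next
      case False
      then have hx: "height t' x = H" using x by simp
      have mn': "\<forall>y \<in> tverts t'. (height t' y < H \<or> height t y < H) \<longrightarrow> subtree t' y = subtree t y"
        using mn tv by auto
      show False using core[OF t' t LB LA hx HL mn'] x by simp
    qed
  qed
qed

end
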